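(* Consider $N$ agents with dynamics $\dot q_i=v_i$, $M_i(q_i)\dot v_i+C_i(q_i,v_i)v_i+g_i(q_i)=\tau_i$, $i=1,\dots,N$, satisfying the standing assumptions below, and a directed graph with $N$ nodes, $M$ edges and incidence matrix $B$. Let $q_d(t)\in\mathbb{R}^n$ be a smooth reference trajectory. Let $\Pi_i,K_i\in\mathbb{R}^{n\times n}$ be symmetric positive definite, and let $K_\zeta\in\mathbb{R}^{Mn\times Mn}$ be symmetric positive definite. Define $\tilde q_i=q_i-q_d$, $v_{i,r}=\dot q_d-\Pi_i\tilde q_i$, $s_i=v_i-v_{i,r}$, and apply to each agent the control law $$\tau_i=M_i(q_i)\dot v_{i,r}+C_i(q_i,\dot q_i)v_{i,r}+g_i(q_i)-K_is_i-\Pi_i\tilde q_i+u_i .$$ To each edge $k$ attach an artificial spring state $\zeta_k\in\mathbb{R}^n$ with potential $P_\zeta(\zeta)=\tfrac12(\zeta-\zeta_d)^\top K_\zeta(\zeta-\zeta_d)$, where $\zeta=(\zeta_1^\top,\dots,\zeta_M^\top)^\top$ and $\zeta_d\in\mathbb{R}^{Mn}$ is a constant vector of desired relative displacements, with edge dynamics $\dot\zeta=\mu-\frac{\partial P_\zeta}{\partial\zeta}(\zeta)$ and edge output $\frac{\partial P_\zeta}{\partial \zeta}(\zeta)=K_\zeta(\zeta-\zeta_d)$, and interconnect via $\mu=(B^\top\otimes I_n)s$, $u=-(B\otimes I_n)K_\zeta(\zeta-\zeta_d)$, where $s,u$ are the stacked vectors of $s_i,u_i$. The resulting closed-loop system is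 $$\dot{\tilde q}+\Pi\tilde q=s,\quad M(q)\dot s+C(q,\dot q)s+Ks=-\Pi\tilde q-(B\otimes I_n)K_\zeta(\zeta-\zeta_d),\quad \dot\zeta+K_\zeta(\zeta-\zeta_d)=(B^\top\otimes I_n)s,$$ with $\Pi=\mathrm{diag}(\Pi_1,\dots,\Pi_N)$, $K=\mathrm{diag}(K_1,\dots,K_N)$. Then the function $$S(\tilde q,s,\zeta,q)=\tfrac12\tilde q^\top\Pi\tilde q+\tfrac12 s^\top M(q)s+P_\zeta(\zeta)$$ satisfies, along all solutions, $\dot S=-\tilde q^\top\Pi^2\tilde q-s^\top Ks-(\zeta-\zeta_d)^\top K_\zeta^2(\zeta-\zeta_d)$ and $\dot S\le-\beta S$, with $\beta=k_3/k_2$, where $k_2=\max\{\lambda_{\max}(\Pi),\ \sup_q\lambda_{\max}(M(q)),\ \lambda_{\max}(K_\zeta)\}$ and $k_3=\min\{\lambda_{\min}(\Pi^2),\ \lambda_{\min}(K),\ \lambda_{\min}(K_\zeta^2)\}$. Consequently the equilibrium $(\tilde q,s,\zeta)=(0,0,\zeta_d)$ is globally uniformly exponentially stable, with $S(t)\le e^{-\beta t}S(0)$.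
   Context: Standing assumptions: each $q_i\in\mathbb{R}^n$; $M_i(q_i)$ is symmetric positive definite and uniformly bounded, i.e. there exist constants $0<m_1\le m_2$ with $m_1I\le M_i(q_i)\le m_2 I$ for all $q_i$; $g_i(q_i)=\frac{\partial P_i}{\partial q_i}(q_i)$ for a potential function $P_i$; $C_i(q_i,v_i)$ is a matrix satisfying $C_i(q_i,v_i)v_i=\dot M_i(q_i)v_i-\frac{\partial}{\partial q_i}\big(\tfrac12 v_i^\top M_i(q_i)v_i\big)$ and such that $\dot M_i(q_i)-2C_i(q_i,v_i)$ is skew-symmetric for all $q_i,v_i$. Stacked quantities: $q=(q_1^\top,\dots,q_N^\top)^\top$, similarly $v,\tau,s,u$; $M(q)=\mathrm{diag}(M_1(q_1),\dots,M_N(q_N))$, $C(q,v)=\mathrm{diag}(C_1,\dots,C_N)$. The incidence matrix $B\in\mathbb{R}^{N\times M}$ of a directed graph has entries $b_{ik}=-1$ if node $i$ is the tail of edge $k$, $b_{ik}=1$ if node $i$ is the head of edge $k$, and $0$ otherwise. $\otimes$ denotes the Kronecker product; $\lambda_{\min},\lambda_{\max}$ denote minimal/maximal eigenvalues. *)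

theory Defs
  imports "HOL-Analysis.Analysis"
begin

text \<open>Stacked vectors in R^(N n) are indexed by the product type 'N \<times> 'n:
  the entry (i,a) is component a of agent i.  Similarly for edges ('M \<times> 'n).\<close>

definition blk :: "real^('N::finite \<times> 'n::finite) \<Rightarrow> 'N \<Rightarrow> real^'n" where
  "blk x i = (\<chi> a. x $ (i, a))"

definition stk :: "('N::finite \<Rightarrow> real^'n::finite) \<Rightarrow> real^('N \<times> 'n)" where
  "stk f = (\<chi> p. f (fst p) $ snd p)"

definition blockdiag :: "('N::finite \<Rightarrow> real^'n::finite^'n) \<Rightarrow> real^('N \<times> 'n)^('N \<times> 'n)" where
  "blockdiag A = (\<chi> p r. if fst p = fst r then A (fst p) $ snd p $ snd r else 0)"

definition kronI :: "real^'m::finite^'k::finite \<Rightarrow> real^('m \<times> 'n::finite)^('k \<times> 'n)" where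
  "kronI B = (\<chi> p r. if snd p = snd r then B $ fst p $ fst r else 0)"

definition incidence_matrix :: "real^'M::finite^'N::finite \<Rightarrow> bool" where
  "incidence_matrix B \<longleftrightarrow> (\<forall>k. \<exists>tl hd. tl \<noteq> hd \<and> B $ tl $ k = -1 \<and> B $ hd $ k = 1 \<and>
      (\<forall>i. i \<noteq> tl \<and> i \<noteq> hd \<longrightarrow> B $ i $ k = 0))"

definition sym_pos_def :: "real^'n::finite^'n \<Rightarrow> bool" where
  "sym_pos_def A \<longleftrightarrow> transpose A = A \<and> (\<forall>x. x \<noteq> 0 \<longrightarrow> x \<bullet> (A *v x) > 0)"

definition eigenvalues :: "real^'n::finite^'n \<Rightarrow> real set" where
  "eigenvalues A = {l. \<exists>x. x \<noteq> 0 \<and> A *v x = l *\<^sub>R x}"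

definition lambda_max :: "real^'n::finite^'n \<Rightarrow> real" where
  "lambda_max A = Max (eigenvalues A)"

definition lambda_min :: "real^'n::finite^'n \<Rightarrow> real" where
  "lambda_min A = Min (eigenvalues A)"

definition vref :: "('N::finite \<Rightarrow> real^'n::finite^'n) \<Rightarrow> real^'n \<Rightarrow> real^'n \<Rightarrow> real^('N \<times> 'n) \<Rightarrow> real^('N \<times> 'n)" where
  "vref Pim qdt qd't q = stk (\<lambda>i. qd't - Pim i *v (blk q i - qdt))"

definition closed_loop_sol ::
  "('N::finite \<Rightarrow> real^'n::finite \<Rightarrow> real^'n^'n) \<Rightarrow> ('N \<Rightarrow> real^'n \<Rightarrow> real^'n \<Rightarrow> real^'n^'n) \<Rightarrow>
   ('N \<Rightarrow> real^'n \<Rightarrow> real^'n) \<Rightarrow> ('N \<Rightarrow> real^'n^'n) \<Rightarrow> ('N \<Rightarrow> real^'n^'n) \<Rightarrow>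
   real^('M::finite \<times> 'n)^('M \<times> 'n) \<Rightarrow> real^('M \<times> 'n) \<Rightarrow> real^'M^'N \<Rightarrow>
   (real \<Rightarrow> real^'n) \<Rightarrow> (real \<Rightarrow> real^'n) \<Rightarrow> (real \<Rightarrow> real^'n) \<Rightarrow>
   (real \<Rightarrow> real^('N \<times> 'n)) \<Rightarrow> (real \<Rightarrow> real^('N \<times> 'n)) \<Rightarrow> (real \<Rightarrow> real^('M \<times> 'n)) \<Rightarrow> bool" where
  "closed_loop_sol Mi C g Pim K Kz zd B qd qd' qd'' q v z \<longleftrightarrow>
    (\<forall>t\<ge>0.
      let s = v t - vref Pim (qd t) (qd' t) (q t);
          u = - (kronI B *v (Kz *v (z t - zd)));
          mu = transpose (kronI B) *v s
      in (q has_vector_derivative v t) (at t within {0..}) \<and>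
         (z has_vector_derivative (mu - Kz *v (z t - zd))) (at t within {0..}) \<and>
         (\<exists>a. (v has_vector_derivative a) (at t within {0..}) \<and>
           (\<forall>i. let qi = blk (q t) i; vi = blk (v t) i;
                    vr = qd' t - Pim i *v (qi - qd t);
                    vr' = qd'' t - Pim i *v (vi - qd' t);
                    tau = Mi i qi *v vr' + C i qi vi *v vr + g i qi
                          - K i *v blk s i - Pim i *v (qi - qd t) + blk u i
                in Mi i qi *v blk a i + C i qi vi *v vi + g i qi = tau)))"

definition S_fun ::
  "real^('N::finite \<times> 'n::finite)^('N \<times> 'n) \<Rightarrow> real^('N \<times> 'n)^('N \<times> 'n) \<Rightarrow> real^('M::finite \<times> 'n)^('M \<times> 'n) \<Rightarrow>
   real^('M \<times> 'n) \<Rightarrow> real^('N \<times> 'n) \<Rightarrow> real^('N \<times> 'n) \<Rightarrow> real^('M \<times> 'n) \<Rightarrow> real" where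
  "S_fun PiB Mq Kz zd qt s z =
     (1/2) * (qt \<bullet> (PiB *v qt)) + (1/2) * (s \<bullet> (Mq *v s))
     + (1/2) * ((z - zd) \<bullet> (Kz *v (z - zd)))"

end

theory Submission
  imports Defs
begin
lemma quad_small_neg:
  fixes a c :: real
  assumes "\<And>t. t > 0 \<Longrightarrow> 2*t*a + t^2*c \<le> 0" "a \<ge> 0"
  shows "a = 0"
proof (rule ccontr)
  assume "a \<noteq> 0" then have ap: "a > 0" using assms(2) by simp
  define t where "t = a / (\<bar>c\<bar> + 1)"
  have d: "\<bar>c\<bar> + 1 > 0" by simp
  have tp: "t > 0" using ap d unfolding t_def by (rule divide_pos_pos)
  have "t * (\<bar>c\<bar> + 1) = a" unfolding t_def using d by simp
  then have "t * \<bar>c\<bar> \<le> a" using tp by (simp add: algebra_simps)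
  moreover have "t * (- \<bar>c\<bar>) \<le> t*c"
    by (rule mult_left_mono) (use tp in auto)
  ultimately have tc: "t*c \<ge> -a" by linarith
  have "2*t*a + t^2*c = t*(2*a + t*c)" by (simp add: power2_eq_square algebra_simps)
  with assms(1)[OF tp] have "t*(2*a + t*c) \<le> 0" by simp
  with tp have "2*a + t*c \<le> 0" by (simp add: mult_le_0_iff)
  with tc ap show False by linarith
qed

lemma sym_inner_swap:
  fixes A :: "real^'n::finite^'n"
  assumes "transpose A = A"
  shows "x \<bullet> (A *v y) = y \<bullet> (A *v x)"
proof -
  have "x \<bullet> (A *v y) = (x v* A) \<bullet> y" by (simp add: dot_lmul_matrix)
  also have "x v* A = transpose A *v x" by simp
  also have "\<dots> = A *v x" using assms by simp
  finally show ?thesis by (simp add: inner_commute)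
qed
lemma sym_max_eig:
  fixes A :: "real^'n::finite^'n"
  assumes sym: "transpose A = A"
  shows "\<exists>\<mu>\<in>eigenvalues A. \<forall>x. x \<bullet> (A *v x) \<le> \<mu> * (x \<bullet> x)"
proof -
  let ?f = "\<lambda>x::real^'n. x \<bullet> (A *v x)"
  have "compact (sphere (0::real^'n) 1)" by simp
  moreover have "sphere (0::real^'n) 1 \<noteq> {}" by simp
  moreover have "continuous_on (sphere 0 1) ?f"
  proof -
    have bl: "bounded_linear (\<lambda>x::real^'n. A *v x)"
      using linear_conv_bounded_linear matrix_vector_mul_linear by blast
    show ?thesis
      by (rule continuous_on_inner[OF continuous_on_id bounded_linear.continuous_on[OF bl continuous_on_id]])
  qed
  ultimately have "\<exists>x\<in>sphere 0 1. \<forall>y\<in>sphere 0 1. ?f y \<le> ?f x"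
    by (rule continuous_attains_sup)
  then obtain x0 where x0: "x0 \<in> sphere 0 1" and mx: "\<And>y. y \<in> sphere 0 1 \<Longrightarrow> ?f y \<le> ?f x0"
    by blast
  define \<mu> where "\<mu> = ?f x0"
  have nx0: "x0 \<bullet> x0 = 1" using x0 by (simp add: dot_square_norm)
  have bnd: "?f y \<le> \<mu> * (y \<bullet> y)" for y
  proof (cases "y = 0")
    case True then show ?thesis by simp
  next
    case False
    let ?u = "(1 / norm y) *\<^sub>R y"
    have "?u \<in> sphere 0 1" using False by simp
    then have a1: "?f ?u \<le> \<mu>" using mx \<mu>_def by blast
    have a2: "?f ?u = ?f y / (norm y)^2"
      by (simp add: matrix_vector_mult_scaleR power2_eq_square)
    have a3: "y \<bullet> y = (norm y)^2" by (simp add: dot_square_norm)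
    have a4: "(norm y)^2 > 0" using False by simp
    have "?f y / (norm y)^2 \<le> \<mu>" using a1 a2 by linarith
    then have "?f y \<le> \<mu> * (norm y)^2" using a4 by (simp add: pos_divide_le_eq)
    then show ?thesis using a3 by simp
  qed
  define w where "w = A *v x0 - \<mu> *\<^sub>R x0"
  define c where "c = ?f w - \<mu> * (w \<bullet> w)"
  have key: "2*t*(w \<bullet> w) + t^2*c \<le> 0" if "t > 0" for t
  proof -
    have F1: "?f (x0 + t *\<^sub>R w) \<le> \<mu> * ((x0 + t *\<^sub>R w) \<bullet> (x0 + t *\<^sub>R w))" by (rule bnd)
    have F2: "?f (x0 + t *\<^sub>R w) = \<mu> + 2*t*(w \<bullet> (A *v x0)) + t^2 * ?f w"
      using sym_inner_swap[OF sym, of x0 w] unfolding \<mu>_def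
      by (simp add: matrix_vector_right_distrib matrix_vector_mult_scaleR inner_add_left inner_add_right power2_eq_square algebra_simps)
    have F3: "(x0 + t *\<^sub>R w) \<bullet> (x0 + t *\<^sub>R w) = 1 + 2*t*(w \<bullet> x0) + t^2*(w \<bullet> w)"
      using nx0 by (simp add: inner_add_left inner_add_right power2_eq_square algebra_simps inner_commute)
    have F4: "w \<bullet> (A *v x0) = w \<bullet> w + \<mu> * (w \<bullet> x0)"
      unfolding w_def by (simp add: inner_diff_right inner_diff_left algebra_simps inner_commute)
    have G: "\<mu> + 2*t*(w \<bullet> w + \<mu> * (w \<bullet> x0)) + t^2 * ?f w \<le> \<mu> * (1 + 2*t*(w \<bullet> x0) + t^2*(w \<bullet> w))"
      using F1 unfolding F2 F3 F4 .
    have E1: "2*t*(w \<bullet> w + \<mu> * (w \<bullet> x0)) = 2*t*(w \<bullet> w) + 2*t*(\<mu> * (w \<bullet> x0))" by (simp add: algebra_simps)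
    have E2: "\<mu> * (1 + 2*t*(w \<bullet> x0) + t^2*(w \<bullet> w)) = \<mu> + 2*t*(\<mu> * (w \<bullet> x0)) + t^2*(\<mu> * (w \<bullet> w))" by (simp add: algebra_simps)
    have E3: "t^2*c = t^2 * ?f w - t^2*(\<mu> * (w \<bullet> w))" unfolding c_def by (simp add: algebra_simps)
    show ?thesis using G E1 E2 E3 by linarith
  qed
  have "w \<bullet> w = 0" by (rule quad_small_neg[OF key]) auto
  then have "A *v x0 = \<mu> *\<^sub>R x0" unfolding w_def by simp
  moreover have "x0 \<noteq> 0" using x0 by auto
  ultimately have "\<mu> \<in> eigenvalues A" unfolding eigenvalues_def by blast
  with bnd show ?thesis by blast
qed


lemma neg_mv: "(- A) *v x = - (A *v (x::real^'n::finite))"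
  by (simp add: matrix_vector_mult_def vec_eq_iff sum_negf)

lemma eig_le_bound:
  fixes A :: "real^'n::finite^'n"
  assumes "l \<in> eigenvalues A" "\<And>x. x \<bullet> (A *v x) \<le> \<mu> * (x \<bullet> x)"
  shows "l \<le> \<mu>"
proof -
  obtain x where x: "x \<noteq> 0" "A *v x = l *\<^sub>R x" using assms(1) unfolding eigenvalues_def by blast
  have "l * (x \<bullet> x) \<le> \<mu> * (x \<bullet> x)" using assms(2)[of x] x(2) by simp
  moreover have "x \<bullet> x > 0" using x(1) by simp
  ultimately show ?thesis by simp
qed

lemma eig_ge_bound:
  fixes A :: "real^'n::finite^'n"
  assumes "l \<in> eigenvalues A" "\<And>x. \<nu> * (x \<bullet> x) \<le> x \<bullet> (A *v x)"
  shows "\<nu> \<le> l"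
proof -
  obtain x where x: "x \<noteq> 0" "A *v x = l *\<^sub>R x" using assms(1) unfolding eigenvalues_def by blast
  have "\<nu> * (x \<bullet> x) \<le> l * (x \<bullet> x)" using assms(2)[of x] x(2) by simp
  moreover have "x \<bullet> x > 0" using x(1) by simp
  ultimately show ?thesis by simp
qed

lemma eig_finite:
  fixes A :: "real^'n::finite^'n"
  assumes sym: "transpose A = A"
  shows "finite (eigenvalues A)"
proof -
  define e where "e l = (SOME x. x \<noteq> 0 \<and> A *v x = l *\<^sub>R x)" for l
  have ev: "e l \<noteq> 0 \<and> A *v e l = l *\<^sub>R e l" if "l \<in> eigenvalues A" for l
  proof -
    have "\<exists>x. x \<noteq> 0 \<and> A *v x = l *\<^sub>R x" using that unfolding eigenvalues_def by simp
    then show ?thesis unfolding e_def by (rule someI_ex)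
  qed
  have inj: "inj_on e (eigenvalues A)"
  proof (rule inj_onI)
    fix l l' assume l: "l \<in> eigenvalues A" and l': "l' \<in> eigenvalues A" and eq: "e l = e l'"
    have "l *\<^sub>R e l = A *v e l" using ev[OF l] by simp
    also have "\<dots> = A *v e l'" by (simp only: eq)
    also have "\<dots> = l' *\<^sub>R e l'" using ev[OF l'] by simp
    also have "\<dots> = l' *\<^sub>R e l" by (simp only: eq)
    finally have "l *\<^sub>R e l = l' *\<^sub>R e l" .
    then show "l = l'" using ev[OF l] by simp
  qed
  have "pairwise orthogonal (e ` eigenvalues A)"
  proof (clarsimp simp: pairwise_def)
    fix l l' assume l: "l \<in> eigenvalues A" and l': "l' \<in> eigenvalues A" and ne: "e l \<noteq> e l'"
    have "l * (e l \<bullet> e l') = (A *v e l) \<bullet> e l'" using ev[OF l] by simp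
    also have "\<dots> = e l \<bullet> (A *v e l')" by (subst inner_commute) (rule sym_inner_swap[OF sym])
    also have "\<dots> = l' * (e l \<bullet> e l')" using ev[OF l'] by simp
    finally have "(l - l') * (e l \<bullet> e l') = 0" by (simp add: algebra_simps)
    moreover have "l \<noteq> l'" using ne by auto
    ultimately show "orthogonal (e l) (e l')" by (simp add: orthogonal_def)
  qed
  moreover have "0 \<notin> e ` eigenvalues A" using ev by auto
  ultimately have "independent (e ` eigenvalues A)" by (rule pairwise_orthogonal_independent)
  then have "finite (e ` eigenvalues A)" by (rule finiteI_independent)
  then show ?thesis by (rule finite_imageD[OF _ inj])
qed

lemma sym_eig:
  fixes A :: "real^'n::finite^'n"
  assumes sym: "transpose A = A"
  shows "lambda_max A \<in> eigenvalues A \<and> (\<forall>x. x \<bullet> (A *v x) \<le> lambda_max A * (x \<bullet> x)) \<and>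
         lambda_min A \<in> eigenvalues A \<and> (\<forall>x. lambda_min A * (x \<bullet> x) \<le> x \<bullet> (A *v x))"
proof -
  have fin: "finite (eigenvalues A)" by (rule eig_finite[OF sym])
  obtain \<mu> where mu: "\<mu> \<in> eigenvalues A" "\<And>x. x \<bullet> (A *v x) \<le> \<mu> * (x \<bullet> x)"
    using sym_max_eig[OF sym] by blast
  have "lambda_max A = \<mu>" unfolding lambda_max_def
  proof (rule Max_eqI[OF fin])
    fix y assume "y \<in> eigenvalues A" then show "y \<le> \<mu>" by (rule eig_le_bound) (rule mu(2))
  qed (rule mu(1))
  have "transpose (- A) = - transpose A" by (simp add: transpose_def vec_eq_iff)
  then have symn: "transpose (- A) = - A" using sym by simp
  obtain \<mu>' where mu': "\<mu>' \<in> eigenvalues (- A)" "\<And>x. x \<bullet> ((- A) *v x) \<le> \<mu>' * (x \<bullet> x)"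
    using sym_max_eig[OF symn] by blast
  obtain x0 where x0: "x0 \<noteq> 0" "- (A *v x0) = \<mu>' *\<^sub>R x0"
    using mu'(1) unfolding eigenvalues_def neg_mv by blast
  have "A *v x0 = - (- (A *v x0))" by simp
  also have "\<dots> = (- \<mu>') *\<^sub>R x0" unfolding x0(2) by simp
  finally have nu1: "- \<mu>' \<in> eigenvalues A" using x0(1) unfolding eigenvalues_def by blast
  have nu2: "(- \<mu>') * (x \<bullet> x) \<le> x \<bullet> (A *v x)" for x using mu'(2)[of x] unfolding neg_mv by simp
  have "lambda_min A = - \<mu>'" unfolding lambda_min_def
  proof (rule Min_eqI[OF fin])
    fix y assume "y \<in> eigenvalues A" then show "- \<mu>' \<le> y" by (rule eig_ge_bound) (rule nu2)
  qed (rule nu1)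
  show ?thesis using mu nu1 nu2 \<open>lambda_max A = \<mu>\<close> \<open>lambda_min A = - \<mu>'\<close> by auto
qed


lemma blk_stk[simp]: "blk (stk f) i = f i"
  by (simp add: blk_def stk_def vec_eq_iff)

lemma stk_blk[simp]: "stk (blk x) = x"
  by (simp add: blk_def stk_def vec_eq_iff)

lemma blk_nth: "blk x i $ a = x $ (i, a)"
  by (simp add: blk_def)

lemma inner_blk: "(x::real^('N::finite \<times> 'n::finite)) \<bullet> y = (\<Sum>i\<in>UNIV. blk x i \<bullet> blk y i)"
proof -
  have "x \<bullet> y = (\<Sum>p\<in>UNIV. x $ p * y $ p)" by (simp add: inner_vec_def)
  also have "\<dots> = (\<Sum>p\<in>UNIV \<times> UNIV. x $ p * y $ p)" by (simp add: UNIV_Times_UNIV)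
  also have "\<dots> = (\<Sum>i\<in>UNIV. \<Sum>a\<in>UNIV. x $ (i,a) * y $ (i,a))" by (simp add: sum.cartesian_product case_prod_unfold)
  also have "\<dots> = (\<Sum>i\<in>UNIV. blk x i \<bullet> blk y i)" by (simp add: inner_vec_def blk_nth)
  finally show ?thesis .
qed

lemma blk_add[simp]: "blk (x + y) i = blk x i + blk y i"
  by (simp add: blk_def vec_eq_iff)
lemma blk_diff[simp]: "blk (x - y) i = blk x i - blk y i"
  by (simp add: blk_def vec_eq_iff)
lemma blk_minus[simp]: "blk (- x) i = - blk x i"
  by (simp add: blk_def vec_eq_iff)
lemma blk_scaleR[simp]: "blk (c *\<^sub>R x) i = c *\<^sub>R blk x i"
  by (simp add: blk_def vec_eq_iff)

lemma blockdiag_mv: "blockdiag A *v x = stk (\<lambda>i. A i *v blk x i)"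
proof -
  have "(blockdiag A *v x) $ p = (A (fst p) *v blk x (fst p)) $ snd p" for p
  proof -
    have "(blockdiag A *v x) $ p = (\<Sum>r\<in>UNIV. blockdiag A $ p $ r * x $ r)"
      by (simp add: matrix_vector_mult_def)
    also have "\<dots> = (\<Sum>r\<in>UNIV \<times> UNIV. blockdiag A $ p $ r * x $ r)" by (simp add: UNIV_Times_UNIV)
    also have "\<dots> = (\<Sum>i\<in>UNIV. \<Sum>b\<in>UNIV. blockdiag A $ p $ (i,b) * x $ (i,b))"
      by (simp add: sum.cartesian_product case_prod_unfold)
    also have "\<dots> = (\<Sum>i\<in>UNIV. if i = fst p then (\<Sum>b\<in>UNIV. A (fst p) $ snd p $ b * x $ (fst p,b)) else 0)"
      by (rule sum.cong) (auto simp: blockdiag_def)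
    also have "\<dots> = (\<Sum>b\<in>UNIV. A (fst p) $ snd p $ b * x $ (fst p,b))"
      by (simp add: sum.delta')
    also have "\<dots> = (A (fst p) *v blk x (fst p)) $ snd p"
      by (simp add: matrix_vector_mult_def blk_nth)
    finally show ?thesis .
  qed
  then show ?thesis by (simp add: stk_def vec_eq_iff)
qed

lemma transpose_blockdiag: "transpose (blockdiag A) = blockdiag (\<lambda>i. transpose (A i))"
  by (simp add: transpose_def blockdiag_def vec_eq_iff)

lemma quad_blockdiag: "x \<bullet> (blockdiag A *v x) = (\<Sum>i\<in>UNIV. blk x i \<bullet> (A i *v blk x i))"
  by (simp add: blockdiag_mv inner_blk[of x])

lemma inner_transpose: "x \<bullet> (M *v y) = (transpose M *v x) \<bullet> (y::real^_)"
  by (simp add: dot_lmul_matrix)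

lemma sym_pos_def_blockdiag:
  assumes "\<And>i. sym_pos_def (A i)"
  shows "sym_pos_def (blockdiag A)"
  unfolding sym_pos_def_def
proof (intro conjI allI impI)
  show "transpose (blockdiag A) = blockdiag A"
    using assms by (simp add: transpose_blockdiag sym_pos_def_def)
  fix x :: "real^('a \<times> 'b)" assume "x \<noteq> 0"
  have "\<exists>i. blk x i \<noteq> 0"
  proof (rule ccontr)
    assume "\<not> (\<exists>i. blk x i \<noteq> 0)"
    then have "blk x = (\<lambda>i. 0)" by auto
    then have "x = stk (\<lambda>i. 0)" using stk_blk[of x] by simp
    also have "\<dots> = 0" by (simp add: stk_def vec_eq_iff)
    finally show False using \<open>x \<noteq> 0\<close> by simp
  qed
  then obtain i where i: "blk x i \<noteq> 0" by blast
  have ge: "\<forall>j\<in>UNIV. 0 \<le> blk x j \<bullet> (A j *v blk x j)"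
  proof
    fix j show "0 \<le> blk x j \<bullet> (A j *v blk x j)"
      using assms[of j] unfolding sym_pos_def_def by (cases "blk x j = 0") (auto simp: less_imp_le)
  qed
  have "0 < blk x i \<bullet> (A i *v blk x i)" using assms i unfolding sym_pos_def_def by blast
  also have "\<dots> \<le> (\<Sum>j\<in>UNIV. blk x j \<bullet> (A j *v blk x j))"
    by (rule member_le_sum) (use ge in auto)
  finally show "0 < x \<bullet> (blockdiag A *v x)" by (simp add: quad_blockdiag)
qed

lemma sym_pos_def_sq:
  fixes A :: "real^'n::finite^'n"
  assumes "sym_pos_def A"
  shows "sym_pos_def (A ** A)"
  unfolding sym_pos_def_def
proof (intro conjI allI impI)
  show "transpose (A ** A) = A ** A" using assms by (simp add: matrix_transpose_mul sym_pos_def_def)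
  fix x :: "real^'n" assume x: "x \<noteq> 0"
  have "A *v x \<noteq> 0"
  proof
    assume "A *v x = 0"
    moreover have "0 < x \<bullet> (A *v x)" using assms x unfolding sym_pos_def_def by blast
    ultimately show False by simp
  qed
  moreover have "x \<bullet> ((A ** A) *v x) = (A *v x) \<bullet> (A *v x)"
    using assms by (simp add: matrix_vector_mul_assoc[symmetric] inner_transpose sym_pos_def_def)
  ultimately show "0 < x \<bullet> ((A ** A) *v x)" by simp
qed


lemma bl_mv: "bounded_linear (\<lambda>x::real^'n::finite. (A::real^'n^'m::finite) *v x)"
  using linear_conv_bounded_linear matrix_vector_mul_linear by blast

lemma bbl_mv: "bounded_bilinear (\<lambda>(A::real^'n::finite^'m::finite) (x::real^'n). A *v x)"
proof -
  have "bilinear (\<lambda>(A::real^'n::finite^'m::finite) (x::real^'n). A *v x)"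
    unfolding bilinear_def
    by (auto intro!: linearI simp: matrix_vector_right_distrib matrix_vector_mult_add_rdistrib
        matrix_vector_mult_scaleR matrix_vector_mult_def vec_eq_iff sum_distrib_left sum.distrib algebra_simps)
  then show ?thesis by (simp add: bilinear_conv_bounded_bilinear)
qed

lemma quad_deriv:
  fixes F :: "real \<Rightarrow> real^'n::finite^'n" and w :: "real \<Rightarrow> real^'n"
  assumes "(w has_vector_derivative w') (at t within T)"
    and "(F has_vector_derivative F') (at t within T)"
  shows "((\<lambda>\<tau>. w \<tau> \<bullet> (F \<tau> *v w \<tau>)) has_real_derivative
          (w t \<bullet> (F t *v w' + F' *v w t) + w' \<bullet> (F t *v w t))) (at t within T)"
proof -
  have 1: "((\<lambda>\<tau>. F \<tau> *v w \<tau>) has_vector_derivative (F t *v w' + F' *v w t)) (at t within T)"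
    using bounded_bilinear.has_vector_derivative[OF bbl_mv assms(2) assms(1)] by simp
  have "((\<lambda>\<tau>. w \<tau> \<bullet> (F \<tau> *v w \<tau>)) has_vector_derivative
          (w t \<bullet> (F t *v w' + F' *v w t) + w' \<bullet> (F t *v w t))) (at t within T)"
    using bounded_bilinear.has_vector_derivative[OF bounded_bilinear_inner assms(1) 1] by simp
  then show ?thesis by (simp add: has_real_derivative_iff_has_vector_derivative)
qed

lemma bl_blk: "bounded_linear (\<lambda>x::real^('N::finite \<times> 'n::finite). blk x i)"
proof -
  have "linear (\<lambda>x::real^('N::finite \<times> 'n::finite). blk x i)"
    by (rule linearI) (simp_all add: blk_def vec_eq_iff)
  then show ?thesis using linear_conv_bounded_linear by blast
qed

lemma skew_quad:
  fixes S :: "real^'n::finite^'n"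
  assumes "transpose S = - S"
  shows "x \<bullet> (S *v x) = 0"
proof -
  have "x \<bullet> (S *v x) = (transpose S *v x) \<bullet> x" by (simp add: dot_lmul_matrix)
  also have "\<dots> = - ((S *v x) \<bullet> x)" using assms
    by (simp add: neg_mv)
  finally show ?thesis by (simp add: inner_commute)
qed




lemma blk_vref: "blk (vref Pim qdt qd't q) i = qd't - Pim i *v (blk q i - qdt)"
  by (simp add: vref_def)

lemma agent_deriv:
  fixes Mi :: "real^'n::finite \<Rightarrow> real^'n^'n" and DM :: "real^'n \<Rightarrow> real^'n \<Rightarrow> real^'n^'n"
  assumes M_sym: "\<And>x. transpose (Mi x) = Mi x"
    and M_deriv: "\<And>x. (Mi has_derivative DM x) (at x)"
    and C_skew: "\<And>x w. transpose (DM x w - 2 *\<^sub>R C x w) = - (DM x w - 2 *\<^sub>R C x w)"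
    and Pi_sym: "transpose P = P"
    and qd1: "(qd has_vector_derivative qd' t) (at t within T)"
    and qd2: "(qd' has_vector_derivative qd'' t) (at t within T)"
    and hq: "(qi has_vector_derivative vi t) (at t within T)"
    and hv: "(vi has_vector_derivative ai) (at t within T)"
    and hag: "Mi (qi t) *v ai + C (qi t) (vi t) *v vi t + gg =
       Mi (qi t) *v (qd'' t - P *v (vi t - qd' t)) + C (qi t) (vi t) *v (qd' t - P *v (qi t - qd t)) + gg
        - K *v (vi t - (qd' t - P *v (qi t - qd t))) - P *v (qi t - qd t) + ui"
  shows "((\<lambda>\<tau>. (1/2) * ((qi \<tau> - qd \<tau>) \<bullet> (P *v (qi \<tau> - qd \<tau>)))
              + (1/2) * ((vi \<tau> - (qd' \<tau> - P *v (qi \<tau> - qd \<tau>))) \<bullet> (Mi (qi \<tau>) *v (vi \<tau> - (qd' \<tau> - P *v (qi \<tau> - qd \<tau>))))))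
          has_real_derivative
          (- ((P *v (qi t - qd t)) \<bullet> (P *v (qi t - qd t)))
           - (vi t - (qd' t - P *v (qi t - qd t))) \<bullet> (K *v (vi t - (qd' t - P *v (qi t - qd t))))
           + (vi t - (qd' t - P *v (qi t - qd t))) \<bullet> ui)) (at t within T)"
proof -
  define Q where "Q \<tau> = qi \<tau> - qd \<tau>" for \<tau>
  define s where "s \<tau> = vi \<tau> - (qd' \<tau> - P *v (qi \<tau> - qd \<tau>))" for \<tau>
  define Mt where "Mt \<tau> = Mi (qi \<tau>)" for \<tau>
  define Q' where "Q' = vi t - qd' t"
  define vr' where "vr' = qd'' t - P *v (vi t - qd' t)"
  define s' where "s' = ai - vr'"
  define Dm where "Dm = DM (qi t) (vi t)"
  have dQ: "(Q has_vector_derivative Q') (at t within T)"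
    unfolding Q_def[abs_def] Q'_def by (rule has_vector_derivative_diff[OF hq qd1])
  have dvr: "((\<lambda>\<tau>. qd' \<tau> - P *v (qi \<tau> - qd \<tau>)) has_vector_derivative vr') (at t within T)"
    unfolding vr'_def
    by (rule has_vector_derivative_diff[OF qd2 bounded_linear.has_vector_derivative[OF bl_mv has_vector_derivative_diff[OF hq qd1]]])
  have ds: "(s has_vector_derivative s') (at t within T)"
    unfolding s_def[abs_def] s'_def by (rule has_vector_derivative_diff[OF hv dvr])
  have dM: "(Mt has_vector_derivative Dm) (at t within T)"
  proof -
    have "(Mi has_derivative DM (qi t)) (at (qi t) within qi ` T)"
      using M_deriv has_derivative_at_withinI by blast
    from vector_derivative_diff_chain_within[OF hq this]
    show ?thesis unfolding Mt_def[abs_def] Dm_def o_def .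
  qed
  have d1: "((\<lambda>\<tau>. Q \<tau> \<bullet> (P *v Q \<tau>)) has_real_derivative
          (Q t \<bullet> (P *v Q' + 0 *v Q t) + Q' \<bullet> (P *v Q t))) (at t within T)"
    by (rule quad_deriv[OF dQ has_vector_derivative_const])
  have d2: "((\<lambda>\<tau>. s \<tau> \<bullet> (Mt \<tau> *v s \<tau>)) has_real_derivative
          (s t \<bullet> (Mt t *v s' + Dm *v s t) + s' \<bullet> (Mt t *v s t))) (at t within T)"
    by (rule quad_deriv[OF ds dM])
  have d: "((\<lambda>\<tau>. (1/2) * (Q \<tau> \<bullet> (P *v Q \<tau>)) + (1/2) * (s \<tau> \<bullet> (Mt \<tau> *v s \<tau>))) has_real_derivative
          ((1/2) * (Q t \<bullet> (P *v Q' + 0 *v Q t) + Q' \<bullet> (P *v Q t)) +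
           (1/2) * (s t \<bullet> (Mt t *v s' + Dm *v s t) + s' \<bullet> (Mt t *v s t)))) (at t within T)"
    by (intro DERIV_add DERIV_cmult d1 d2)
  have sQ: "s t = vi t - qd' t + P *v Q t" unfolding s_def Q_def by simp
  have Q'e: "Q' = s t - P *v Q t" unfolding Q'_def sQ by simp
  have e1: "Q' \<bullet> (P *v Q t) = Q t \<bullet> (P *v Q')" using sym_inner_swap[OF Pi_sym] by simp
  have e2: "s' \<bullet> (Mt t *v s t) = s t \<bullet> (Mt t *v s')" using sym_inner_swap[OF M_sym] unfolding Mt_def by simp
  have e3: "Q t \<bullet> (P *v Q') = s t \<bullet> (P *v Q t) - (P *v Q t) \<bullet> (P *v Q t)"
  proof -
    have "Q t \<bullet> (P *v Q') = Q t \<bullet> (P *v s t) - Q t \<bullet> (P *v (P *v Q t))"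
      unfolding Q'e by (simp add: matrix_vector_mult_diff_distrib inner_diff_right)
    also have "Q t \<bullet> (P *v s t) = s t \<bullet> (P *v Q t)" using sym_inner_swap[OF Pi_sym] by simp
    also have "Q t \<bullet> (P *v (P *v Q t)) = (P *v Q t) \<bullet> (P *v Q t)" using sym_inner_swap[OF Pi_sym] by simp
    finally show ?thesis .
  qed
  have hag': "Mi (qi t) *v s' = - (C (qi t) (vi t) *v s t) - K *v s t - P *v Q t + ui"
  proof -
    have "Mi (qi t) *v s' = Mi (qi t) *v ai - Mi (qi t) *v vr'"
      unfolding s'_def by (simp add: matrix_vector_mult_diff_distrib)
    also have "Mi (qi t) *v ai = Mi (qi t) *v vr' + C (qi t) (vi t) *v (qd' t - P *v (qi t - qd t))
        - C (qi t) (vi t) *v vi t - K *v s t - P *v Q t + ui"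
      using hag unfolding s_def Q_def vr'_def by (simp add: algebra_simps)
    finally show ?thesis unfolding s_def
      by (simp add: matrix_vector_mult_diff_distrib algebra_simps)
  qed
  have e4: "s t \<bullet> (Dm *v s t) = 2 * (s t \<bullet> (C (qi t) (vi t) *v s t))"
  proof -
    have "s t \<bullet> ((Dm - 2 *\<^sub>R C (qi t) (vi t)) *v s t) = 0"
      unfolding Dm_def by (rule skew_quad[OF C_skew])
    then show ?thesis
      by (simp add: matrix_vector_mult_diff_rdistrib inner_diff_right scaleR_matrix_vector_assoc[symmetric])
  qed
  have val: "(1/2) * (Q t \<bullet> (P *v Q' + 0 *v Q t) + Q' \<bullet> (P *v Q t)) +
           (1/2) * (s t \<bullet> (Mt t *v s' + Dm *v s t) + s' \<bullet> (Mt t *v s t))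
        = - ((P *v Q t) \<bullet> (P *v Q t)) - s t \<bullet> (K *v s t) + s t \<bullet> ui"
  proof -
    have "s t \<bullet> (Mt t *v s') = - (s t \<bullet> (C (qi t) (vi t) *v s t)) - s t \<bullet> (K *v s t) - s t \<bullet> (P *v Q t) + s t \<bullet> ui"
      unfolding Mt_def hag' by (simp add: inner_add_right inner_diff_right)
    then show ?thesis using e1 e2 e3 e4 by (simp add: inner_add_right algebra_simps)
  qed
  show ?thesis using d unfolding val unfolding Q_def s_def Mt_def .
qed



lemma blk_s: "blk (v - vref Pim qdt qd't q) i = blk v i - (qd't - Pim i *v (blk q i - qdt))"
  by (simp add: blk_vref)

lemma blk_qt: "blk (q - stk (\<lambda>i. qdt)) i = blk q i - qdt"
  by simp

lemma deriv_S:
  fixes Mi :: "'N::finite \<Rightarrow> real^'n::finite \<Rightarrow> real^'n^'n"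
    and Kz :: "real^('M::finite \<times> 'n)^('M \<times> 'n)" and B :: "real^'M^'N"
  assumes M_sym: "\<And>i x. transpose (Mi i x) = Mi i x"
    and M_deriv: "\<And>i x. (Mi i has_derivative DM i x) (at x)"
    and C_skew: "\<And>i x w. transpose (DM i x w - 2 *\<^sub>R C i x w) = - (DM i x w - 2 *\<^sub>R C i x w)"
    and Pi_sym: "\<And>i. transpose (Pim i) = Pim i"
    and Kz_sym: "transpose Kz = Kz"
    and qd1: "(qd has_vector_derivative qd' t) (at t within T)"
    and qd2: "(qd' has_vector_derivative qd'' t) (at t within T)"
    and hq: "(q has_vector_derivative v t) (at t within T)"
    and hz: "(z has_vector_derivative (transpose (kronI B) *v (v t - vref Pim (qd t) (qd' t) (q t)) - Kz *v (z t - zd))) (at t within T)"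
    and hv: "(v has_vector_derivative a) (at t within T)"
    and hag: "\<And>i. Mi i (blk (q t) i) *v blk a i + C i (blk (q t) i) (blk (v t) i) *v blk (v t) i + g i (blk (q t) i) =
       Mi i (blk (q t) i) *v (qd'' t - Pim i *v (blk (v t) i - qd' t)) + C i (blk (q t) i) (blk (v t) i) *v (qd' t - Pim i *v (blk (q t) i - qd t)) + g i (blk (q t) i) - K i *v blk (v t - vref Pim (qd t) (qd' t) (q t)) i - Pim i *v (blk (q t) i - qd t) + blk (- (kronI B *v (Kz *v (z t - zd)))) i"
  shows "((\<lambda>\<tau>. S_fun (blockdiag Pim) (blockdiag (\<lambda>i. Mi i (blk (q \<tau>) i))) Kz zd (q \<tau> - stk (\<lambda>i. qd \<tau>)) (v \<tau> - vref Pim (qd \<tau>) (qd' \<tau>) (q \<tau>)) (z \<tau>)) has_real_derivative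
     (- ((q t - stk (\<lambda>i. qd t)) \<bullet> ((blockdiag Pim ** blockdiag Pim) *v (q t - stk (\<lambda>i. qd t))))
      - (v t - vref Pim (qd t) (qd' t) (q t)) \<bullet> (blockdiag K *v (v t - vref Pim (qd t) (qd' t) (q t)))
      - (z t - zd) \<bullet> ((Kz ** Kz) *v (z t - zd)))) (at t within T)"
proof -
  define qt where "qt = q t - stk (\<lambda>i. qd t)"
  define s where "s = v t - vref Pim (qd t) (qd' t) (q t)"
  define e where "e = z t - zd"
  define u where "u = - (kronI B *v (Kz *v e))"
  define Ag where "Ag i \<tau> = (1/2) * ((blk (q \<tau>) i - qd \<tau>) \<bullet> (Pim i *v (blk (q \<tau>) i - qd \<tau>)))
              + (1/2) * ((blk (v \<tau>) i - (qd' \<tau> - Pim i *v (blk (q \<tau>) i - qd \<tau>))) \<bullet> (Mi i (blk (q \<tau>) i) *v (blk (v \<tau>) i - (qd' \<tau> - Pim i *v (blk (q \<tau>) i - qd \<tau>)))))" for i \<tau>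
  have Sd: "S_fun (blockdiag Pim) (blockdiag (\<lambda>i. Mi i (blk (q \<tau>) i))) Kz zd (q \<tau> - stk (\<lambda>i. qd \<tau>)) (v \<tau> - vref Pim (qd \<tau>) (qd' \<tau>) (q \<tau>)) (z \<tau>)
      = (\<Sum>i\<in>UNIV. Ag i \<tau>) + (1/2) * ((z \<tau> - zd) \<bullet> (Kz *v (z \<tau> - zd)))" for \<tau>
    unfolding S_fun_def Ag_def quad_blockdiag blk_s blk_qt
    by (simp add: sum.distrib sum_distrib_left)
  have dA: "(Ag i has_real_derivative
          (- ((Pim i *v blk qt i) \<bullet> (Pim i *v blk qt i)) - blk s i \<bullet> (K i *v blk s i) + blk s i \<bullet> blk u i)) (at t within T)" for i
  proof -
    have hq': "((\<lambda>\<tau>. blk (q \<tau>) i) has_vector_derivative blk (v t) i) (at t within T)"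
      by (rule bounded_linear.has_vector_derivative[OF bl_blk hq])
    have hv': "((\<lambda>\<tau>. blk (v \<tau>) i) has_vector_derivative blk a i) (at t within T)"
      by (rule bounded_linear.has_vector_derivative[OF bl_blk hv])
    have bs: "blk s i = blk (v t) i - (qd' t - Pim i *v (blk (q t) i - qd t))"
      unfolding s_def by (rule blk_s)
    have bq: "blk qt i = blk (q t) i - qd t" unfolding qt_def by (rule blk_qt)
    have hag': "Mi i (blk (q t) i) *v blk a i + C i (blk (q t) i) (blk (v t) i) *v blk (v t) i + g i (blk (q t) i) =
       Mi i (blk (q t) i) *v (qd'' t - Pim i *v (blk (v t) i - qd' t)) + C i (blk (q t) i) (blk (v t) i) *v (qd' t - Pim i *v (blk (q t) i - qd t)) + g i (blk (q t) i)
        - K i *v (blk (v t) i - (qd' t - Pim i *v (blk (q t) i - qd t))) - Pim i *v (blk (q t) i - qd t) + blk u i"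
      using hag[of i] unfolding u_def e_def blk_s .
    have "(Ag i has_real_derivative
          (- ((Pim i *v (blk (q t) i - qd t)) \<bullet> (Pim i *v (blk (q t) i - qd t)))
           - (blk (v t) i - (qd' t - Pim i *v (blk (q t) i - qd t))) \<bullet> (K i *v (blk (v t) i - (qd' t - Pim i *v (blk (q t) i - qd t))))
           + (blk (v t) i - (qd' t - Pim i *v (blk (q t) i - qd t))) \<bullet> blk u i)) (at t within T)"
      unfolding Ag_def[abs_def]
      by (rule agent_deriv[where Mi="Mi i" and DM="DM i" and C="C i" and P="Pim i" and K="K i" and qd=qd and qd'=qd' and qd''=qd'' and t=t and T=T
            and qi="\<lambda>\<tau>. blk (q \<tau>) i" and vi="\<lambda>\<tau>. blk (v \<tau>) i" and ai="blk a i" and gg="g i (blk (q t) i)" and ui="blk u i",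
            OF M_sym M_deriv C_skew Pi_sym qd1 qd2 hq' hv' hag'])
    then show ?thesis unfolding bs bq .
  qed
  define e' where "e' = transpose (kronI B) *v s - Kz *v e"
  have hz': "((\<lambda>\<tau>. z \<tau> - zd) has_vector_derivative e') (at t within T)"
    using has_vector_derivative_diff[OF hz has_vector_derivative_const[of zd]] unfolding e'_def s_def e_def by simp
  have dE: "((\<lambda>\<tau>. (z \<tau> - zd) \<bullet> (Kz *v (z \<tau> - zd))) has_real_derivative
       (e \<bullet> (Kz *v e' + 0 *v e) + e' \<bullet> (Kz *v e))) (at t within T)"
    using quad_deriv[OF hz' has_vector_derivative_const[of Kz]] unfolding e_def .
  have dT: "((\<lambda>\<tau>. (\<Sum>i\<in>UNIV. Ag i \<tau>) + (1/2) * ((z \<tau> - zd) \<bullet> (Kz *v (z \<tau> - zd)))) has_real_derivative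
       (\<Sum>i\<in>UNIV. - ((Pim i *v blk qt i) \<bullet> (Pim i *v blk qt i)) - blk s i \<bullet> (K i *v blk s i) + blk s i \<bullet> blk u i)
        + (1/2) * (e \<bullet> (Kz *v e' + 0 *v e) + e' \<bullet> (Kz *v e))) (at t within T)"
    by (intro DERIV_add DERIV_sum DERIV_cmult dA dE)
  have PiB_sym: "transpose (blockdiag Pim) = blockdiag Pim"
    using Pi_sym by (simp add: transpose_blockdiag)
  have V1: "(\<Sum>i\<in>UNIV. (Pim i *v blk qt i) \<bullet> (Pim i *v blk qt i)) = qt \<bullet> ((blockdiag Pim ** blockdiag Pim) *v qt)"
  proof -
    have "qt \<bullet> ((blockdiag Pim ** blockdiag Pim) *v qt) = qt \<bullet> (blockdiag Pim *v (blockdiag Pim *v qt))"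
      by (simp add: matrix_vector_mul_assoc)
    also have "\<dots> = (blockdiag Pim *v qt) \<bullet> (blockdiag Pim *v qt)"
      by (rule sym_inner_swap[OF PiB_sym])
    also have "\<dots> = (\<Sum>i\<in>UNIV. (Pim i *v blk qt i) \<bullet> (Pim i *v blk qt i))"
      unfolding blockdiag_mv by (subst inner_blk) simp
    finally show ?thesis by simp
  qed
  have V2: "(\<Sum>i\<in>UNIV. blk s i \<bullet> (K i *v blk s i)) = s \<bullet> (blockdiag K *v s)"
    by (simp add: quad_blockdiag)
  have V3: "(\<Sum>i\<in>UNIV. blk s i \<bullet> blk u i) = - ((kronI B *v (Kz *v e)) \<bullet> s)"
  proof -
    have "(\<Sum>i\<in>UNIV. blk s i \<bullet> blk u i) = s \<bullet> u" by (rule inner_blk[symmetric])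
    then show ?thesis unfolding u_def by (simp add: inner_commute)
  qed
  have V4: "(1/2) * (e \<bullet> (Kz *v e' + 0 *v e) + e' \<bullet> (Kz *v e)) = (kronI B *v (Kz *v e)) \<bullet> s - (Kz *v e) \<bullet> (Kz *v e)"
  proof -
    have "e' \<bullet> (Kz *v e) = e \<bullet> (Kz *v e')" by (rule sym_inner_swap[OF Kz_sym])
    then have "(1/2) * (e \<bullet> (Kz *v e' + 0 *v e) + e' \<bullet> (Kz *v e)) = e \<bullet> (Kz *v e')" by simp
    also have "\<dots> = e \<bullet> (Kz *v (transpose (kronI B) *v s)) - e \<bullet> (Kz *v (Kz *v e))"
      unfolding e'_def by (simp add: matrix_vector_mult_diff_distrib inner_diff_right)
    also have "e \<bullet> (Kz *v (transpose (kronI B) *v s)) = (transpose (kronI B) *v s) \<bullet> (Kz *v e)"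
      by (rule sym_inner_swap[OF Kz_sym])
    also have "\<dots> = (s v* kronI B) \<bullet> (Kz *v e)" by simp
    also have "\<dots> = s \<bullet> (kronI B *v (Kz *v e))" by (rule dot_lmul_matrix)
    also have "\<dots> = (kronI B *v (Kz *v e)) \<bullet> s" by (rule inner_commute)
    also have "e \<bullet> (Kz *v (Kz *v e)) = (Kz *v e) \<bullet> (Kz *v e)" by (rule sym_inner_swap[OF Kz_sym])
    finally show ?thesis .
  qed
  have V5: "e \<bullet> ((Kz ** Kz) *v e) = (Kz *v e) \<bullet> (Kz *v e)"
    by (simp add: matrix_vector_mul_assoc[symmetric] sym_inner_swap[OF Kz_sym, of e "Kz *v e"])
  have val: "(\<Sum>i\<in>UNIV. - ((Pim i *v blk qt i) \<bullet> (Pim i *v blk qt i)) - blk s i \<bullet> (K i *v blk s i) + blk s i \<bullet> blk u i)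
        + (1/2) * (e \<bullet> (Kz *v e' + 0 *v e) + e' \<bullet> (Kz *v e))
      = - (qt \<bullet> ((blockdiag Pim ** blockdiag Pim) *v qt)) - s \<bullet> (blockdiag K *v s) - e \<bullet> ((Kz ** Kz) *v e)"
    unfolding V4 V5 V1[symmetric] V2[symmetric]
    by (simp add: sum.distrib sum_subtractf sum_negf V3)
  have "((\<lambda>\<tau>. S_fun (blockdiag Pim) (blockdiag (\<lambda>i. Mi i (blk (q \<tau>) i))) Kz zd (q \<tau> - stk (\<lambda>i. qd \<tau>)) (v \<tau> - vref Pim (qd \<tau>) (qd' \<tau>) (q \<tau>)) (z \<tau>)) has_real_derivative
       (- (qt \<bullet> ((blockdiag Pim ** blockdiag Pim) *v qt)) - s \<bullet> (blockdiag K *v s) - e \<bullet> ((Kz ** Kz) *v e))) (at t within T)"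
    unfolding Sd val[symmetric] by (rule dT)
  then show ?thesis unfolding qt_def s_def e_def .
qed



lemma spd_eig:
  fixes A :: "real^'n::finite^'n"
  assumes "sym_pos_def A"
  shows "0 < lambda_min A \<and> lambda_min A \<le> lambda_max A \<and> (\<forall>x. x \<bullet> (A *v x) \<le> lambda_max A * (x \<bullet> x))
     \<and> (\<forall>x. lambda_min A * (x \<bullet> x) \<le> x \<bullet> (A *v x))"
proof -
  have sym: "transpose A = A" using assms by (simp add: sym_pos_def_def)
  note E = sym_eig[OF sym]
  obtain x where x: "x \<noteq> 0" "A *v x = lambda_min A *\<^sub>R x" using E unfolding eigenvalues_def by blast
  have xx: "x \<bullet> x > 0" using x(1) by simp
  have "0 < x \<bullet> (A *v x)" using assms x(1) unfolding sym_pos_def_def by blast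
  then have "0 < lambda_min A * (x \<bullet> x)" using x(2) by simp
  then have p: "0 < lambda_min A" using xx by (simp add: zero_less_mult_iff)
  have "lambda_min A * (x \<bullet> x) \<le> lambda_max A * (x \<bullet> x)"
    using E[THEN conjunct2, THEN conjunct1, rule_format, of x] x(2) by simp
  then have "lambda_min A \<le> lambda_max A" using xx by simp
  with p E show ?thesis by blast
qed

lemma MB_bounds:
  fixes Mi :: "'N::finite \<Rightarrow> real^'n::finite \<Rightarrow> real^'n^'n"
  assumes M_sym: "\<And>i x. transpose (Mi i x) = Mi i x"
    and M_lower: "\<And>i x w. m1 * (w \<bullet> w) \<le> w \<bullet> (Mi i x *v w)"
    and M_upper: "\<And>i x w. w \<bullet> (Mi i x *v w) \<le> m2 * (w \<bullet> w)"
  shows "m1 * (y \<bullet> y) \<le> y \<bullet> (blockdiag (\<lambda>i. Mi i (blk x i)) *v y)"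
    and "y \<bullet> (blockdiag (\<lambda>i. Mi i (blk x i)) *v y) \<le> m2 * (y \<bullet> y)"
    and "lambda_max (blockdiag (\<lambda>i. Mi i (blk x i))) \<le> m2"
    and "y \<bullet> (blockdiag (\<lambda>i. Mi i (blk x i)) *v y) \<le> lambda_max (blockdiag (\<lambda>i. Mi i (blk x i))) * (y \<bullet> y)"
proof -
  have lo: "m1 * (y \<bullet> y) \<le> y \<bullet> (blockdiag (\<lambda>i. Mi i (blk x i)) *v y)" for y
  proof -
    have "m1 * (y \<bullet> y) = (\<Sum>i\<in>UNIV. m1 * (blk y i \<bullet> blk y i))" by (simp add: inner_blk[of y y] sum_distrib_left)
    also have "\<dots> \<le> (\<Sum>i\<in>UNIV. blk y i \<bullet> (Mi i (blk x i) *v blk y i))" by (rule sum_mono) (rule M_lower)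
    finally show ?thesis by (simp add: quad_blockdiag)
  qed
  have up: "y \<bullet> (blockdiag (\<lambda>i. Mi i (blk x i)) *v y) \<le> m2 * (y \<bullet> y)" for y
  proof -
    have "(\<Sum>i\<in>UNIV. blk y i \<bullet> (Mi i (blk x i) *v blk y i)) \<le> (\<Sum>i\<in>UNIV. m2 * (blk y i \<bullet> blk y i))"
      by (rule sum_mono) (rule M_upper)
    also have "\<dots> = m2 * (y \<bullet> y)" by (simp add: inner_blk[of y y] sum_distrib_left)
    finally show ?thesis by (simp add: quad_blockdiag)
  qed
  have sym: "transpose (blockdiag (\<lambda>i. Mi i (blk x i))) = blockdiag (\<lambda>i. Mi i (blk x i))"
    using M_sym by (simp add: transpose_blockdiag)
  note E = sym_eig[OF sym]
  show "m1 * (y \<bullet> y) \<le> y \<bullet> (blockdiag (\<lambda>i. Mi i (blk x i)) *v y)" by (rule lo)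
  show "y \<bullet> (blockdiag (\<lambda>i. Mi i (blk x i)) *v y) \<le> m2 * (y \<bullet> y)" by (rule up)
  show "y \<bullet> (blockdiag (\<lambda>i. Mi i (blk x i)) *v y) \<le> lambda_max (blockdiag (\<lambda>i. Mi i (blk x i))) * (y \<bullet> y)"
    using E by blast
  show "lambda_max (blockdiag (\<lambda>i. Mi i (blk x i))) \<le> m2"
    using E eig_le_bound[OF _ up] by blast
qed

lemma sol_deriv:
  fixes Mi :: "'N::finite \<Rightarrow> real^'n::finite \<Rightarrow> real^'n^'n"
    and Kz :: "real^('M::finite \<times> 'n)^('M \<times> 'n)" and B :: "real^'M^'N"
  assumes M_sym: "\<And>i x. transpose (Mi i x) = Mi i x"
    and M_deriv: "\<And>i x. (Mi i has_derivative DM i x) (at x)"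
    and C_skew: "\<And>i x w. transpose (DM i x w - 2 *\<^sub>R C i x w) = - (DM i x w - 2 *\<^sub>R C i x w)"
    and Pi_sym: "\<And>i. transpose (Pim i) = Pim i"
    and Kz_sym: "transpose Kz = Kz"
    and qd_d1: "\<And>t. (qd has_vector_derivative qd' t) (at t)"
    and qd_d2: "\<And>t. (qd' has_vector_derivative qd'' t) (at t)"
    and sol: "closed_loop_sol Mi C g Pim K Kz zd B qd qd' qd'' q v z"
    and t: "t \<ge> 0"
  shows "((\<lambda>\<tau>. S_fun (blockdiag Pim) (blockdiag (\<lambda>i. Mi i (blk (q \<tau>) i))) Kz zd (q \<tau> - stk (\<lambda>i. qd \<tau>)) (v \<tau> - vref Pim (qd \<tau>) (qd' \<tau>) (q \<tau>)) (z \<tau>)) has_real_derivative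
     (- ((q t - stk (\<lambda>i. qd t)) \<bullet> ((blockdiag Pim ** blockdiag Pim) *v (q t - stk (\<lambda>i. qd t))))
      - (v t - vref Pim (qd t) (qd' t) (q t)) \<bullet> (blockdiag K *v (v t - vref Pim (qd t) (qd' t) (q t)))
      - (z t - zd) \<bullet> ((Kz ** Kz) *v (z t - zd)))) (at t within {0..})"
proof -
  from sol t have H: "(q has_vector_derivative v t) (at t within {0..})"
    "(z has_vector_derivative (transpose (kronI B) *v (v t - vref Pim (qd t) (qd' t) (q t)) - Kz *v (z t - zd))) (at t within {0..})"
    "\<exists>a. (v has_vector_derivative a) (at t within {0..}) \<and> (\<forall>i. Mi i (blk (q t) i) *v blk a i + C i (blk (q t) i) (blk (v t) i) *v blk (v t) i + g i (blk (q t) i) =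
       Mi i (blk (q t) i) *v (qd'' t - Pim i *v (blk (v t) i - qd' t)) + C i (blk (q t) i) (blk (v t) i) *v (qd' t - Pim i *v (blk (q t) i - qd t)) + g i (blk (q t) i) - K i *v blk (v t - vref Pim (qd t) (qd' t) (q t)) i - Pim i *v (blk (q t) i - qd t) + blk (- (kronI B *v (Kz *v (z t - zd)))) i)"
    unfolding closed_loop_sol_def Let_def by auto
  from H(3) obtain a where a: "(v has_vector_derivative a) (at t within {0..})" and
    ag: "\<And>i. Mi i (blk (q t) i) *v blk a i + C i (blk (q t) i) (blk (v t) i) *v blk (v t) i + g i (blk (q t) i) =
       Mi i (blk (q t) i) *v (qd'' t - Pim i *v (blk (v t) i - qd' t)) + C i (blk (q t) i) (blk (v t) i) *v (qd' t - Pim i *v (blk (q t) i - qd t)) + g i (blk (q t) i) - K i *v blk (v t - vref Pim (qd t) (qd' t) (q t)) i - Pim i *v (blk (q t) i - qd t) + blk (- (kronI B *v (Kz *v (z t - zd)))) i"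
    by blast
  show ?thesis
    by (rule deriv_S[where Mi=Mi and DM=DM and C=C and Pim=Pim and Kz=Kz and qd=qd and qd'=qd' and qd''=qd''
          and q=q and v=v and z=z and t=t and T="{0..}" and a=a and g=g and K=K and B=B and zd=zd, OF M_sym M_deriv C_skew Pi_sym Kz_sym
          has_vector_derivative_at_within[OF qd_d1] has_vector_derivative_at_within[OF qd_d2] H(1) H(2) a ag])
qed



lemma gronwall_exp:
  fixes S Sd :: "real \<Rightarrow> real"
  assumes D: "\<And>t. t \<ge> 0 \<Longrightarrow> (S has_real_derivative Sd t) (at t within {0..})"
    and L: "\<And>t. t \<ge> 0 \<Longrightarrow> Sd t \<le> - \<beta> * S t"
    and t0: "0 \<le> t0" "t0 \<le> t"
  shows "S t \<le> exp (- \<beta> * (t - t0)) * S t0"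
proof -
  define W where "W \<tau> = exp (\<beta> * \<tau>) * S \<tau>" for \<tau>
  have dexp0: "((\<lambda>\<tau>. exp (\<beta> * \<tau>)) has_real_derivative exp (\<beta> * x) * (\<beta> * 1)) (at x)" for x
    by (intro DERIV_fun_exp DERIV_cmult DERIV_ident)
  have dexp: "((\<lambda>\<tau>. exp (\<beta> * \<tau>)) has_real_derivative exp (\<beta> * x) * (\<beta> * 1)) (at x within s)" for x s
    by (rule has_field_derivative_at_within[OF dexp0])
  have dW: "(W has_real_derivative (exp (\<beta> * x) * Sd x + exp (\<beta> * x) * (\<beta> * 1) * S x)) (at x within {0..})"
    if "x \<ge> 0" for x
    unfolding W_def[abs_def] by (rule DERIV_mult'[OF dexp D[OF that]])
  have cont: "continuous_on {t0..t} W"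
  proof (rule continuous_on_eq_continuous_within[THEN iffD2], intro ballI)
    fix x assume x: "x \<in> {t0..t}"
    then have "x \<ge> 0" using t0 by auto
    have "continuous (at x within {0..}) W" by (rule DERIV_continuous[OF dW[OF \<open>x \<ge> 0\<close>]])
    then show "continuous (at x within {t0..t}) W"
      by (rule continuous_within_subset) (use t0 in auto)
  qed
  have "W t \<le> W t0"
  proof (rule DERIV_nonpos_imp_decreasing_open[OF t0(2) _ cont])
    fix x assume x: "t0 < x" "x < t"
    then have xp: "x > 0" using t0 by auto
    have "(W has_real_derivative (exp (\<beta> * x) * Sd x + exp (\<beta> * x) * (\<beta> * 1) * S x)) (at x within {0<..})"
      by (rule has_field_derivative_subset[OF dW]) (use xp in auto)
    then have "(W has_real_derivative (exp (\<beta> * x) * Sd x + exp (\<beta> * x) * (\<beta> * 1) * S x)) (at x)"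
      using at_within_open[of x "{0<..}"] xp by simp
    moreover have "exp (\<beta> * x) * Sd x + exp (\<beta> * x) * (\<beta> * 1) * S x \<le> 0"
    proof -
      have "exp (\<beta> * x) * Sd x + exp (\<beta> * x) * (\<beta> * 1) * S x = exp (\<beta> * x) * (\<beta> * S x + Sd x)"
        by (simp add: algebra_simps)
      moreover have "\<beta> * S x + Sd x \<le> 0" using L[of x] xp by simp
      ultimately show ?thesis by (simp add: mult_nonneg_nonpos)
    qed
    ultimately show "\<exists>y. (W has_real_derivative y) (at x) \<and> y \<le> 0" by blast
  qed
  then have "exp (- \<beta> * t) * W t \<le> exp (- \<beta> * t) * W t0" by (simp add: mult_left_mono)
  moreover have "exp (- \<beta> * t) * W t = S t"
  proof -
    have "exp (- \<beta> * t) * exp (\<beta> * t) = 1" by (simp add: exp_add[symmetric])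
    then show ?thesis unfolding W_def by (metis mult.assoc mult_1)
  qed
  moreover have "exp (- \<beta> * t) * W t0 = exp (- \<beta> * (t - t0)) * S t0"
  proof -
    have "exp (- \<beta> * t) * exp (\<beta> * t0) = exp (- \<beta> * (t - t0))"
      by (simp add: exp_add[symmetric] right_diff_distrib)
    then show ?thesis unfolding W_def by (metis mult.assoc)
  qed
  ultimately show ?thesis by linarith
qed


lemma gronwall2:
  fixes S Sd :: "real \<Rightarrow> real"
  assumes "\<forall>t\<ge>0. (S has_real_derivative Sd t) (at t within {0..}) \<and> Sd t \<le> - \<beta> * S t"
  shows "\<forall>t0 t. 0 \<le> t0 \<and> t0 \<le> t \<longrightarrow> S t \<le> exp (- \<beta> * (t - t0)) * S t0"
  using gronwall_exp[of S Sd \<beta>] assms by blast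

lemma norm_triple: "norm (a, b, c) = sqrt (a \<bullet> a + b \<bullet> b + c \<bullet> c)"
  for a :: "'a::real_inner" and b :: "'b::real_inner" and c :: "'c::real_inner"
  by (simp add: norm_Pair power2_norm_eq_inner add.assoc)

lemma exp_stab:
  fixes Sf :: "real \<Rightarrow> real" and a :: "real \<Rightarrow> 'a::real_inner" and b :: "real \<Rightarrow> 'b::real_inner" and c :: "real \<Rightarrow> 'c::real_inner"
  assumes decay: "\<forall>t0 t. 0 \<le> t0 \<and> t0 \<le> t \<longrightarrow> Sf t \<le> exp (- \<beta> * (t - t0)) * Sf t0"
    and lo: "\<And>t. k1 * (a t \<bullet> a t + b t \<bullet> b t + c t \<bullet> c t) \<le> Sf t"
    and up: "\<And>t. Sf t \<le> K2 * (a t \<bullet> a t + b t \<bullet> b t + c t \<bullet> c t)"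
    and k1: "k1 > 0" and K2: "K2 > 0"
  shows "\<forall>t0 t. 0 \<le> t0 \<and> t0 \<le> t \<longrightarrow> norm (a t, b t, c t) \<le> sqrt (K2 / k1) * exp (- (\<beta> / 2) * (t - t0)) * norm (a t0, b t0, c t0)"
proof (intro allI impI)
  fix t0 t :: real assume tt: "0 \<le> t0 \<and> t0 \<le> t"
  define N where "N \<tau> = a \<tau> \<bullet> a \<tau> + b \<tau> \<bullet> b \<tau> + c \<tau> \<bullet> c \<tau>" for \<tau>
  have N0: "N \<tau> \<ge> 0" for \<tau> unfolding N_def by (simp add: add_nonneg_nonneg)
  define E where "E = exp (- (\<beta> / 2) * (t - t0))"
  have Ep: "E > 0" unfolding E_def by simp
  have E2: "exp (- \<beta> * (t - t0)) = E * E" unfolding E_def by (simp add: exp_add[symmetric] algebra_simps)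
  have "k1 * N t \<le> Sf t" using lo unfolding N_def by blast
  also have "\<dots> \<le> exp (- \<beta> * (t - t0)) * Sf t0" using decay tt by blast
  also have "\<dots> \<le> exp (- \<beta> * (t - t0)) * (K2 * N t0)" using up[of t0] unfolding N_def by (simp add: mult_left_mono)
  finally have "N t \<le> (K2 / k1) * (E * E) * N t0" using k1 unfolding E2 by (simp add: field_simps)
  then have "sqrt (N t) \<le> sqrt ((K2 / k1) * (E * E) * N t0)" by (rule real_sqrt_le_mono)
  also have "\<dots> = sqrt (K2 / k1) * sqrt (E * E) * sqrt (N t0)" by (simp only: real_sqrt_mult)
  also have "sqrt (E * E) = E" using Ep by simp
  finally have "sqrt (N t) \<le> sqrt (K2 / k1) * E * sqrt (N t0)" .
  then show "norm (a t, b t, c t) \<le> sqrt (K2 / k1) * exp (- (\<beta> / 2) * (t - t0)) * norm (a t0, b t0, c t0)"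
  proof -
    have "norm (a t, b t, c t) = sqrt (N t)" "norm (a t0, b t0, c t0) = sqrt (N t0)"
      by (simp_all add: norm_triple N_def)
    with \<open>sqrt (N t) \<le> sqrt (K2 / k1) * E * sqrt (N t0)\<close> show ?thesis unfolding E_def by simp
  qed
qed



lemma point_bound:
  fixes k2 k3 a b c A1 A2 A3 B1 B2 B3 :: real
  assumes "k2 > 0" "k3 > 0" "a \<ge> 0" "b \<ge> 0" "c \<ge> 0"
    "A1 \<le> k2 * a" "A2 \<le> k2 * b" "A3 \<le> k2 * c"
    "k3 * a \<le> B1" "k3 * b \<le> B2" "k3 * c \<le> B3"
  shows "- B1 - B2 - B3 \<le> - (k3 / k2) * ((1/2) * A1 + (1/2) * A2 + (1/2) * A3)"
proof -
  have S: "(1/2) * A1 + (1/2) * A2 + (1/2) * A3 \<le> (1/2) * k2 * (a + b + c)" using assms by (simp add: algebra_simps)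
  have "(k3 / k2) * ((1/2) * A1 + (1/2) * A2 + (1/2) * A3) \<le> (k3 / k2) * ((1/2) * k2 * (a + b + c))"
    by (rule mult_left_mono[OF S]) (use assms in simp)
  also have "\<dots> = (1/2) * k3 * (a + b + c)" using assms(1) by (simp add: field_simps)
  also have "\<dots> \<le> k3 * (a + b + c)" using assms by (simp add: mult_nonneg_nonneg)
  also have "\<dots> \<le> B1 + B2 + B3" using assms by (simp add: algebra_simps)
  finally show ?thesis by simp
qed

theorem mainTheorem1:
  fixes Mi :: "'N::finite \<Rightarrow> real^'n::finite \<Rightarrow> real^'n^'n"
    and DM :: "'N \<Rightarrow> real^'n \<Rightarrow> real^'n \<Rightarrow> real^'n^'n"
    and C :: "'N \<Rightarrow> real^'n \<Rightarrow> real^'n \<Rightarrow> real^'n^'n"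
    and g :: "'N \<Rightarrow> real^'n \<Rightarrow> real^'n"
    and P :: "'N \<Rightarrow> real^'n \<Rightarrow> real"
    and Pim K :: "'N \<Rightarrow> real^'n^'n"
    and Kz :: "real^('M::finite \<times> 'n)^('M \<times> 'n)"
    and zd :: "real^('M \<times> 'n)"
    and B :: "real^'M^'N"
    and qd qd' qd'' :: "real \<Rightarrow> real^'n"
    and m1 m2 :: real
  assumes M_sym: "\<And>i x. transpose (Mi i x) = Mi i x"
    and M_bounds: "0 < m1" "m1 \<le> m2"
    and M_lower: "\<And>i x w. m1 * (w \<bullet> w) \<le> w \<bullet> (Mi i x *v w)"
    and M_upper: "\<And>i x w. w \<bullet> (Mi i x *v w) \<le> m2 * (w \<bullet> w)"
    and M_deriv: "\<And>i x. (Mi i has_derivative DM i x) (at x)"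
    and g_grad: "\<And>i x. (P i has_derivative (\<lambda>h. g i x \<bullet> h)) (at x)"
    and C_prop: "\<And>i x w. C i x w *v w =
          DM i x w *v w - (\<chi> j. (1/2) * (w \<bullet> (DM i x (axis j 1) *v w)))"
    and C_skew: "\<And>i x w. transpose (DM i x w - 2 *\<^sub>R C i x w) = - (DM i x w - 2 *\<^sub>R C i x w)"
    and B_inc: "incidence_matrix B"
    and qd_d1: "\<And>t. (qd has_vector_derivative qd' t) (at t)"
    and qd_d2: "\<And>t. (qd' has_vector_derivative qd'' t) (at t)"
    and Pi_pd: "\<And>i. sym_pos_def (Pim i)"
    and K_pd: "\<And>i. sym_pos_def (K i)"
    and Kz_pd: "sym_pos_def Kz"
  shows
   "let PiB = blockdiag Pim; KB = blockdiag K;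
        MB = (\<lambda>x :: real^('N \<times> 'n). blockdiag (\<lambda>i. Mi i (blk x i)));
        k2 = max (lambda_max PiB) (max (Sup (range (\<lambda>x. lambda_max (MB x)))) (lambda_max Kz));
        k3 = min (lambda_min (PiB ** PiB)) (min (lambda_min KB) (lambda_min (Kz ** Kz)));
        \<beta> = k3 / k2
    in (\<forall>q v z. closed_loop_sol Mi C g Pim K Kz zd B qd qd' qd'' q v z \<longrightarrow>
         (let qt = (\<lambda>t. q t - stk (\<lambda>i. qd t));
              s = (\<lambda>t. v t - vref Pim (qd t) (qd' t) (q t));
              S = (\<lambda>t. S_fun PiB (MB (q t)) Kz zd (qt t) (s t) (z t));
              Sdot = (\<lambda>t. - (qt t \<bullet> ((PiB ** PiB) *v qt t)) - s t \<bullet> (KB *v s t)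
                          - (z t - zd) \<bullet> ((Kz ** Kz) *v (z t - zd)))
          in \<forall>t\<ge>0. (S has_real_derivative Sdot t) (at t within {0..}) \<and>
                   Sdot t \<le> - \<beta> * S t \<and>
                   S t \<le> exp (- \<beta> * t) * S 0))
     \<and> (\<exists>c>0. \<exists>r>0. \<forall>q v z. closed_loop_sol Mi C g Pim K Kz zd B qd qd' qd'' q v z \<longrightarrow>
          (let X = (\<lambda>t. (q t - stk (\<lambda>i. qd t), v t - vref Pim (qd t) (qd' t) (q t), z t - zd))
           in \<forall>t0 t. 0 \<le> t0 \<and> t0 \<le> t \<longrightarrow> norm (X t) \<le> c * exp (- r * (t - t0)) * norm (X t0)))"
proof -
  define k2 where "k2 = max (lambda_max (blockdiag Pim)) (max (Sup (range (\<lambda>x. lambda_max (blockdiag (\<lambda>i. Mi i (blk x i)))))) (lambda_max Kz))"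
  define k3 where "k3 = min (lambda_min (blockdiag Pim ** blockdiag Pim)) (min (lambda_min (blockdiag K)) (lambda_min (Kz ** Kz)))"
  define \<beta> where "\<beta> = k3 / k2"
  have Pi_sym: "\<And>i. transpose (Pim i) = Pim i" using Pi_pd by (simp add: sym_pos_def_def)
  have Kz_sym: "transpose Kz = Kz" using Kz_pd by (simp add: sym_pos_def_def)
  have PiB_spd: "sym_pos_def (blockdiag Pim)" by (rule sym_pos_def_blockdiag[OF Pi_pd])
  have KB_spd: "sym_pos_def (blockdiag K)" by (rule sym_pos_def_blockdiag[OF K_pd])
  note EP = spd_eig[OF PiB_spd]
  note EP2 = spd_eig[OF sym_pos_def_sq[OF PiB_spd]]
  note EK = spd_eig[OF KB_spd]
  note EZ = spd_eig[OF Kz_pd]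
  note EZ2 = spd_eig[OF sym_pos_def_sq[OF Kz_pd]]
  have bdd: "bdd_above (range (\<lambda>x. lambda_max (blockdiag (\<lambda>i. Mi i (blk x i)))))"
    by (rule bdd_aboveI[where M=m2]) (auto intro: MB_bounds(3)[where Mi=Mi, OF M_sym M_lower M_upper])
  have k2p: "k2 > 0" unfolding k2_def using EP by linarith
  have k3p: "k3 > 0" unfolding k3_def using EP2 EK EZ2 by linarith
  have bp: "\<beta> > 0" unfolding \<beta>_def using k2p k3p by simp
  have up_gen: "y \<bullet> (A *v y) \<le> k2 * (y \<bullet> y)" if "\<forall>y. y \<bullet> (A *v y) \<le> l * (y \<bullet> y)" "l \<le> k2" for A :: "real^'z::finite^'z" and y l
  proof -
    have "l * (y \<bullet> y) \<le> k2 * (y \<bullet> y)" by (rule mult_right_mono) (use that in auto)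
    then show ?thesis using that(1) by (meson order.trans)
  qed
  have lo_gen: "k3 * (y \<bullet> y) \<le> y \<bullet> (A *v y)" if "\<forall>y. l * (y \<bullet> y) \<le> y \<bullet> (A *v y)" "k3 \<le> l" for A :: "real^'z::finite^'z" and y l
  proof -
    have "k3 * (y \<bullet> y) \<le> l * (y \<bullet> y)" by (rule mult_right_mono) (use that in auto)
    then show ?thesis using that(1) by (meson order.trans)
  qed
  have upP: "y \<bullet> (blockdiag Pim *v y) \<le> k2 * (y \<bullet> y)" for y
    by (rule up_gen) (use EP in \<open>auto simp: k2_def\<close>)
  have upZ: "y \<bullet> (Kz *v y) \<le> k2 * (y \<bullet> y)" for y
    by (rule up_gen) (use EZ in \<open>auto simp: k2_def\<close>)
  have upM: "y \<bullet> (blockdiag (\<lambda>i. Mi i (blk x i)) *v y) \<le> k2 * (y \<bullet> y)" for x y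
  proof (rule up_gen)
    show "\<forall>y. y \<bullet> (blockdiag (\<lambda>i. Mi i (blk x i)) *v y) \<le> lambda_max (blockdiag (\<lambda>i. Mi i (blk x i))) * (y \<bullet> y)"
      using MB_bounds(4)[where Mi=Mi, OF M_sym M_lower M_upper] by blast
    have "lambda_max (blockdiag (\<lambda>i. Mi i (blk x i))) \<le> Sup (range (\<lambda>x. lambda_max (blockdiag (\<lambda>i. Mi i (blk x i)))))"
      by (rule cSup_upper[OF _ bdd]) simp
    then show "lambda_max (blockdiag (\<lambda>i. Mi i (blk x i))) \<le> k2" unfolding k2_def by linarith
  qed
  have loP2: "k3 * (y \<bullet> y) \<le> y \<bullet> ((blockdiag Pim ** blockdiag Pim) *v y)" for y
    by (rule lo_gen) (use EP2 in \<open>auto simp: k3_def\<close>)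
  have loK: "k3 * (y \<bullet> y) \<le> y \<bullet> (blockdiag K *v y)" for y
    by (rule lo_gen) (use EK in \<open>auto simp: k3_def\<close>)
  have loZ2: "k3 * (y \<bullet> y) \<le> y \<bullet> ((Kz ** Kz) *v y)" for y
    by (rule lo_gen) (use EZ2 in \<open>auto simp: k3_def\<close>)
  have sol_facts: "\<forall>t\<ge>0. ((\<lambda>t. S_fun (blockdiag Pim) (blockdiag (\<lambda>i. Mi i (blk (q t) i))) Kz zd (q t - stk (\<lambda>i. qd t)) (v t - vref Pim (qd t) (qd' t) (q t)) (z t))
        has_real_derivative
        (- ((q t - stk (\<lambda>i. qd t)) \<bullet> ((blockdiag Pim ** blockdiag Pim) *v (q t - stk (\<lambda>i. qd t))))
          - (v t - vref Pim (qd t) (qd' t) (q t)) \<bullet> (blockdiag K *v (v t - vref Pim (qd t) (qd' t) (q t)))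
          - (z t - zd) \<bullet> ((Kz ** Kz) *v (z t - zd)))) (at t within {0..}) \<and>
      (- ((q t - stk (\<lambda>i. qd t)) \<bullet> ((blockdiag Pim ** blockdiag Pim) *v (q t - stk (\<lambda>i. qd t))))
          - (v t - vref Pim (qd t) (qd' t) (q t)) \<bullet> (blockdiag K *v (v t - vref Pim (qd t) (qd' t) (q t)))
          - (z t - zd) \<bullet> ((Kz ** Kz) *v (z t - zd))) \<le> - \<beta> * S_fun (blockdiag Pim) (blockdiag (\<lambda>i. Mi i (blk (q t) i))) Kz zd (q t - stk (\<lambda>i. qd t)) (v t - vref Pim (qd t) (qd' t) (q t)) (z t)"
    if sol: "closed_loop_sol Mi C g Pim K Kz zd B qd qd' qd'' q v z" for q v z
  proof (intro allI impI conjI)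
    fix t :: real assume t: "t \<ge> 0"
    show "((\<lambda>t. S_fun (blockdiag Pim) (blockdiag (\<lambda>i. Mi i (blk (q t) i))) Kz zd (q t - stk (\<lambda>i. qd t)) (v t - vref Pim (qd t) (qd' t) (q t)) (z t))
        has_real_derivative
        (- ((q t - stk (\<lambda>i. qd t)) \<bullet> ((blockdiag Pim ** blockdiag Pim) *v (q t - stk (\<lambda>i. qd t))))
          - (v t - vref Pim (qd t) (qd' t) (q t)) \<bullet> (blockdiag K *v (v t - vref Pim (qd t) (qd' t) (q t)))
          - (z t - zd) \<bullet> ((Kz ** Kz) *v (z t - zd)))) (at t within {0..})"
      by (rule sol_deriv[OF M_sym M_deriv C_skew Pi_sym Kz_sym qd_d1 qd_d2 sol t])
    show "(- ((q t - stk (\<lambda>i. qd t)) \<bullet> ((blockdiag Pim ** blockdiag Pim) *v (q t - stk (\<lambda>i. qd t))))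
          - (v t - vref Pim (qd t) (qd' t) (q t)) \<bullet> (blockdiag K *v (v t - vref Pim (qd t) (qd' t) (q t)))
          - (z t - zd) \<bullet> ((Kz ** Kz) *v (z t - zd))) \<le> - \<beta> * S_fun (blockdiag Pim) (blockdiag (\<lambda>i. Mi i (blk (q t) i))) Kz zd (q t - stk (\<lambda>i. qd t)) (v t - vref Pim (qd t) (qd' t) (q t)) (z t)"
      unfolding S_fun_def \<beta>_def
      by (rule point_bound[OF k2p k3p inner_ge_zero inner_ge_zero inner_ge_zero upP upM upZ loP2 loK loZ2])
  qed
  define k1 where "k1 = (1/2) * min (lambda_min (blockdiag Pim)) (min m1 (lambda_min Kz))"
  have k1p: "k1 > 0" unfolding k1_def using EP EZ M_bounds(1) by simp
  have lo2: "(2*k1) * (y \<bullet> y) \<le> y \<bullet> (A *v y)" if "\<forall>y. l * (y \<bullet> y) \<le> y \<bullet> (A *v y)" "2*k1 \<le> l" for A :: "real^'z::finite^'z" and y l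
  proof -
    have "(2*k1) * (y \<bullet> y) \<le> l * (y \<bullet> y)" by (rule mult_right_mono) (use that in auto)
    then show ?thesis using that(1) by (meson order.trans)
  qed
  have loP: "(2*k1) * (y \<bullet> y) \<le> y \<bullet> (blockdiag Pim *v y)" for y
    by (rule lo2) (use EP in \<open>auto simp: k1_def\<close>)
  have loZ: "(2*k1) * (y \<bullet> y) \<le> y \<bullet> (Kz *v y)" for y
    by (rule lo2) (use EZ in \<open>auto simp: k1_def\<close>)
  have loM: "(2*k1) * (y \<bullet> y) \<le> y \<bullet> (blockdiag (\<lambda>i. Mi i (blk x i)) *v y)" for x y
    by (rule lo2) (use MB_bounds(1)[where Mi=Mi, OF M_sym M_lower M_upper] in \<open>auto simp: k1_def\<close>)
  have loS: "k1 * (qt \<bullet> qt + s \<bullet> s + e \<bullet> e) \<le> S_fun (blockdiag Pim) (blockdiag (\<lambda>i. Mi i (blk x i))) Kz zd qt s (e + zd)" for qt s e x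
  proof -
    have "k1 * (qt \<bullet> qt + s \<bullet> s + e \<bullet> e) = (1/2) * ((2*k1) * (qt \<bullet> qt)) + (1/2) * ((2*k1) * (s \<bullet> s)) + (1/2) * ((2*k1) * (e \<bullet> e))"
      by (simp add: algebra_simps)
    also have "\<dots> \<le> S_fun (blockdiag Pim) (blockdiag (\<lambda>i. Mi i (blk x i))) Kz zd qt s (e + zd)"
      unfolding S_fun_def using loP[of qt] loM[of s x] loZ[of e] by simp
    finally show ?thesis .
  qed
  have upS: "S_fun (blockdiag Pim) (blockdiag (\<lambda>i. Mi i (blk x i))) Kz zd qt s (e + zd) \<le> (k2/2) * (qt \<bullet> qt + s \<bullet> s + e \<bullet> e)" for qt s e x
  proof -
    have "(k2/2) * (qt \<bullet> qt + s \<bullet> s + e \<bullet> e) = (1/2) * (k2 * (qt \<bullet> qt)) + (1/2) * (k2 * (s \<bullet> s)) + (1/2) * (k2 * (e \<bullet> e))"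
      by (simp add: algebra_simps)
    moreover have "S_fun (blockdiag Pim) (blockdiag (\<lambda>i. Mi i (blk x i))) Kz zd qt s (e + zd) \<le> (1/2) * (k2 * (qt \<bullet> qt)) + (1/2) * (k2 * (s \<bullet> s)) + (1/2) * (k2 * (e \<bullet> e))"
      unfolding S_fun_def using upP[of qt] upM[of s x] upZ[of e] by simp
    ultimately show ?thesis by simp
  qed
  have part2: "\<exists>c>0. \<exists>r>0. \<forall>q v z. closed_loop_sol Mi C g Pim K Kz zd B qd qd' qd'' q v z \<longrightarrow>
      (\<forall>t0 t. 0 \<le> t0 \<and> t0 \<le> t \<longrightarrow>
        norm (q t - stk (\<lambda>i. qd t), v t - vref Pim (qd t) (qd' t) (q t), z t - zd)
          \<le> c * exp (- r * (t - t0)) * norm (q t0 - stk (\<lambda>i. qd t0), v t0 - vref Pim (qd t0) (qd' t0) (q t0), z t0 - zd))"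
  proof -
    have c0: "0 < sqrt ((k2/2) / k1)" using k2p k1p by simp
    have r0: "0 < \<beta>/2" using bp by simp
    have "\<forall>q v z. closed_loop_sol Mi C g Pim K Kz zd B qd qd' qd'' q v z \<longrightarrow>
      (\<forall>t0 t. 0 \<le> t0 \<and> t0 \<le> t \<longrightarrow>
        norm (q t - stk (\<lambda>i. qd t), v t - vref Pim (qd t) (qd' t) (q t), z t - zd)
          \<le> sqrt ((k2/2) / k1) * exp (- (\<beta>/2) * (t - t0)) * norm (q t0 - stk (\<lambda>i. qd t0), v t0 - vref Pim (qd t0) (qd' t0) (q t0), z t0 - zd))"
    proof (rule allI, rule allI, rule allI, rule impI)
    fix q v z assume sol: "closed_loop_sol Mi C g Pim K Kz zd B qd qd' qd'' q v z"
    note dec = gronwall2[OF sol_facts[OF sol]]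
    have lo': "k1 * ((q t - stk (\<lambda>i. qd t)) \<bullet> (q t - stk (\<lambda>i. qd t)) + (v t - vref Pim (qd t) (qd' t) (q t)) \<bullet> (v t - vref Pim (qd t) (qd' t) (q t)) + (z t - zd) \<bullet> (z t - zd))
       \<le> S_fun (blockdiag Pim) (blockdiag (\<lambda>i. Mi i (blk (q t) i))) Kz zd (q t - stk (\<lambda>i. qd t)) (v t - vref Pim (qd t) (qd' t) (q t)) (z t)" for t
      using loS[of "q t - stk (\<lambda>i. qd t)" "v t - vref Pim (qd t) (qd' t) (q t)" "z t - zd" "q t"] by simp
    have up': "S_fun (blockdiag Pim) (blockdiag (\<lambda>i. Mi i (blk (q t) i))) Kz zd (q t - stk (\<lambda>i. qd t)) (v t - vref Pim (qd t) (qd' t) (q t)) (z t)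
       \<le> (k2/2) * ((q t - stk (\<lambda>i. qd t)) \<bullet> (q t - stk (\<lambda>i. qd t)) + (v t - vref Pim (qd t) (qd' t) (q t)) \<bullet> (v t - vref Pim (qd t) (qd' t) (q t)) + (z t - zd) \<bullet> (z t - zd))" for t
      using upS[of "q t" "q t - stk (\<lambda>i. qd t)" "v t - vref Pim (qd t) (qd' t) (q t)" "z t - zd"] by simp
    have k2p': "k2/2 > 0" using k2p by simp
    show "\<forall>t0 t. 0 \<le> t0 \<and> t0 \<le> t \<longrightarrow>
        norm (q t - stk (\<lambda>i. qd t), v t - vref Pim (qd t) (qd' t) (q t), z t - zd)
          \<le> sqrt ((k2/2) / k1) * exp (- (\<beta>/2) * (t - t0)) * norm (q t0 - stk (\<lambda>i. qd t0), v t0 - vref Pim (qd t0) (qd' t0) (q t0), z t0 - zd)"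
      by (rule exp_stab[OF dec lo' up' k1p k2p'])
  qed
    then show ?thesis using c0 r0 by blast
  qed
  show ?thesis
    unfolding Let_def k2_def[symmetric] k3_def[symmetric] \<beta>_def[symmetric]
    apply (intro conjI allI impI)
    subgoal for q v z t using sol_facts[of q v z] by blast
    subgoal for q v z t using sol_facts[of q v z] by blast
    subgoal premises p for q v z t
    proof -
      note G = gronwall2[OF sol_facts[OF p(1)]]
      from G[rule_format, of 0 t] p(2) show ?thesis by simp
    qed
    subgoal using part2 by simp
    done
qed


end
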